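(* In the setting described in the context, suppose $T$ and $A$ are irreducible. Then for $0<y<r_A$ and $\nu=0,1,\dots,\tau-1$, \[ \delta(\Gamma_A^*(y\omega_\tau^\nu))=\delta(\Gamma_A^*(y)),\qquad \mu(y\omega_\tau^\nu)=\mu(y)\Delta_M(\omega_\tau^\nu)^{-1},\qquad v(y\omega_\tau^\nu)=\Delta_M(\omega_\tau^\nu)v(y). \]
   Context: Let $M_0,M$ be positive integers. Consider a discrete-time Markov chain of M/G/1 type with state space $\{(0,j):1\le j\le M_0\}\cup\{(k,j):k\ge1,1\le j\le M\}$ and transition matrix in lexicographic order \[ T=\begin{pmatrix}B(0)&B(1)&B(2)&\cdots\\ C(0)&A(1)&A(2)&\cdots\\ O&A(0)&A(1)&\cdots\\ O&O&A(0)&\cdots\\ \vdots&\vdots&\vdots&\ddots\end{pmatrix}, \] with nonnegative blocks $A(k)$ ($M\times M$), $B(0)$, $B(k)$, $C(0)$ of compatible sizes, $A=\sum_{k\ge0}A(k)$ stochastic, $B(0)e+\sum_{k\ge1}B(k)e=e$. $A^*(z)=\sum_{k\ge0}z^kA(k)$ has convergence radius $r_A$; $\Gamma_A^*(z)=z^{-1}A^*(z)$. For a square complex matrix $X$, $\delta(X)$ is a maximum-modulus eigenvalue with nonnegative argument and maximal real part among maximum-modulus eigenvalues. Period $\tau$: in the Markov additive process on $\mathbb Z\times\{1,\dots,M\}$ moving from $(k_0,i)$ to $(k_0+k,j)$ with probability $[\Gamma_A(k)]_{i,j}$, where $\Gamma_A(k)=A(k+1)$ ($k\ge-1$), $O$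 ($k\le-2$), $\tau$ is the common value of $\gcd\{k\ne0:(0,j)\to(k,j)\}$ ($\to$ = reachable with positive probability in $\ge1$ steps). Fix $p:\{1,\dots,M\}\to\{0,\dots,\tau-1\}$ with $[\Gamma_A(k)]_{i,j}>0$ only if $k\equiv p(j)-p(i)\pmod\tau$, and set $\Delta_M(z)=\mathrm{diag}(z^{-p(1)},\dots,z^{-p(M)})$. For $z\in\mathbb C$, $\mu(z)$ and $v(z)$ denote left and right eigenvectors of $\Gamma_A^*(z)$ for the eigenvalue $\delta(\Gamma_A^*(z))$, normalized by $\mu(z)\Delta_M(z/|z|)e=1$ and $\mu(z)v(z)=1$. $\omega_\tau=\exp(2\pi\iota/\tau)$. *)

theory Defs
  imports "HOL-Analysis.Analysis"
begin

(* Conventions: phases are 0-based; an M x M matrix is a function nat => nat => _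
   whose entries with indices < M are meaningful.  A k i j = [A(k)]_{i,j};
   B k i j = [B(k)]_{i,j} (B 0 is M0 x M0, B k for k >= 1 is M0 x M); C0 i j = [C(0)]_{i,j}. *)

definition inS :: "nat \<Rightarrow> nat \<Rightarrow> nat \<times> nat \<Rightarrow> bool" where
  "inS M0 M s = (case s of (l, j) \<Rightarrow> (l = 0 \<and> j < M0) \<or> (l \<ge> 1 \<and> j < M))"

definition Tent :: "(nat \<Rightarrow> nat \<Rightarrow> nat \<Rightarrow> real) \<Rightarrow> (nat \<Rightarrow> nat \<Rightarrow> nat \<Rightarrow> real)
    \<Rightarrow> (nat \<Rightarrow> nat \<Rightarrow> real) \<Rightarrow> nat \<times> nat \<Rightarrow> nat \<times> nat \<Rightarrow> real" where
  "Tent A B C0 s s' = (case (s, s') of ((l, i), (l', j)) \<Rightarrow>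
     if l = 0 then B l' i j
     else if l' = 0 then (if l = 1 then C0 i j else 0)
     else if l \<le> l' + 1 then A (l' + 1 - l) i j else 0)"

definition Tstep :: "nat \<Rightarrow> nat \<Rightarrow> (nat \<Rightarrow> nat \<Rightarrow> nat \<Rightarrow> real) \<Rightarrow> (nat \<Rightarrow> nat \<Rightarrow> nat \<Rightarrow> real)
    \<Rightarrow> (nat \<Rightarrow> nat \<Rightarrow> real) \<Rightarrow> nat \<times> nat \<Rightarrow> nat \<times> nat \<Rightarrow> bool" where
  "Tstep M0 M A B C0 s s' = (inS M0 M s \<and> inS M0 M s' \<and> Tent A B C0 s s' > 0)"

definition T_irreducible :: "nat \<Rightarrow> nat \<Rightarrow> (nat \<Rightarrow> nat \<Rightarrow> nat \<Rightarrow> real) \<Rightarrow> (nat \<Rightarrow> nat \<Rightarrow> nat \<Rightarrow> real)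
    \<Rightarrow> (nat \<Rightarrow> nat \<Rightarrow> real) \<Rightarrow> bool" where
  "T_irreducible M0 M A B C0 =
     (\<forall>s s'. inS M0 M s \<longrightarrow> inS M0 M s' \<longrightarrow> (Tstep M0 M A B C0)\<^sup>*\<^sup>* s s')"

definition Asum :: "(nat \<Rightarrow> nat \<Rightarrow> nat \<Rightarrow> real) \<Rightarrow> nat \<Rightarrow> nat \<Rightarrow> real" where
  "Asum A i j = (\<Sum>k. A k i j)"

definition matrix_irreducible :: "nat \<Rightarrow> (nat \<Rightarrow> nat \<Rightarrow> real) \<Rightarrow> bool" where
  "matrix_irreducible M X =
     (\<forall>i j. i < M \<longrightarrow> j < M \<longrightarrow> (\<lambda>a b. a < M \<and> b < M \<and> X a b > 0)\<^sup>*\<^sup>* i j)"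

definition rA :: "nat \<Rightarrow> (nat \<Rightarrow> nat \<Rightarrow> nat \<Rightarrow> real) \<Rightarrow> ereal" where
  "rA M A = (INF ij \<in> {..<M} \<times> {..<M}. conv_radius (\<lambda>k. A k (fst ij) (snd ij)))"

definition GammaA :: "(nat \<Rightarrow> nat \<Rightarrow> nat \<Rightarrow> real) \<Rightarrow> complex \<Rightarrow> nat \<Rightarrow> nat \<Rightarrow> complex" where
  "GammaA A z i j = (\<Sum>k. z ^ k * complex_of_real (A k i j)) / z"

text \<open>Transition (k0,i) -> (k1,j) of the MAP has probability [Gamma_A(k1-k0)]_{ij},
  Gamma_A(k) = A(k+1) for k >= -1 and O for k <= -2.\<close>
definition MAPstep :: "nat \<Rightarrow> (nat \<Rightarrow> nat \<Rightarrow> nat \<Rightarrow> real) \<Rightarrow> int \<times> nat \<Rightarrow> int \<times> nat \<Rightarrow> bool" where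
  "MAPstep M A s s' = (case (s, s') of ((k0, i), (k1, j)) \<Rightarrow>
     i < M \<and> j < M \<and> k1 - k0 \<ge> -1 \<and> A (nat (k1 - k0 + 1)) i j > 0)"

definition MAP_period_at :: "nat \<Rightarrow> (nat \<Rightarrow> nat \<Rightarrow> nat \<Rightarrow> real) \<Rightarrow> nat \<Rightarrow> nat" where
  "MAP_period_at M A j = nat (Gcd {k :: int. k \<noteq> 0 \<and> (MAPstep M A)\<^sup>+\<^sup>+ (0, j) (k, j)})"

text \<open>tau: the common value over all phases; we take it at phase 0.\<close>
definition MAP_period :: "nat \<Rightarrow> (nat \<Rightarrow> nat \<Rightarrow> nat \<Rightarrow> real) \<Rightarrow> nat" where
  "MAP_period M A = MAP_period_at M A 0"

definition is_eigenvalue :: "nat \<Rightarrow> (nat \<Rightarrow> nat \<Rightarrow> complex) \<Rightarrow> complex \<Rightarrow> bool" where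
  "is_eigenvalue M X lam =
     (\<exists>v. (\<exists>i<M. v i \<noteq> 0) \<and> (\<forall>i<M. (\<Sum>j<M. X i j * v j) = lam * v i))"

definition delta :: "nat \<Rightarrow> (nat \<Rightarrow> nat \<Rightarrow> complex) \<Rightarrow> complex" where
  "delta M X = (THE lam. is_eigenvalue M X lam
      \<and> (\<forall>m. is_eigenvalue M X m \<longrightarrow> cmod m \<le> cmod lam)
      \<and> Arg lam \<ge> 0
      \<and> (\<forall>m. is_eigenvalue M X m \<longrightarrow> cmod m = cmod lam \<longrightarrow> Re m \<le> Re lam))"

definition is_left_eigvec :: "nat \<Rightarrow> (nat \<Rightarrow> nat \<Rightarrow> complex) \<Rightarrow> complex \<Rightarrow> (nat \<Rightarrow> complex) \<Rightarrow> bool" where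
  "is_left_eigvec M X lam u = ((\<exists>i<M. u i \<noteq> 0) \<and> (\<forall>j<M. (\<Sum>i<M. u i * X i j) = lam * u j))"

definition is_right_eigvec :: "nat \<Rightarrow> (nat \<Rightarrow> nat \<Rightarrow> complex) \<Rightarrow> complex \<Rightarrow> (nat \<Rightarrow> complex) \<Rightarrow> bool" where
  "is_right_eigvec M X lam w = ((\<exists>i<M. w i \<noteq> 0) \<and> (\<forall>i<M. (\<Sum>j<M. X i j * w j) = lam * w i))"

text \<open>Delta_M(w) = diag(w^{-p(1)}, ..., w^{-p(M)}); entry i of the diagonal.\<close>
definition DeltaM :: "(nat \<Rightarrow> nat) \<Rightarrow> complex \<Rightarrow> nat \<Rightarrow> complex" where
  "DeltaM p w i = inverse (w ^ p i)"

definition mu :: "nat \<Rightarrow> (nat \<Rightarrow> nat \<Rightarrow> nat \<Rightarrow> real) \<Rightarrow> (nat \<Rightarrow> nat) \<Rightarrow> complex \<Rightarrow> nat \<Rightarrow> complex" where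
  "mu M A p z = (THE u. (\<forall>i\<ge>M. u i = 0)
      \<and> is_left_eigvec M (GammaA A z) (delta M (GammaA A z)) u
      \<and> (\<Sum>i<M. u i * DeltaM p (z / complex_of_real (cmod z)) i) = 1)"

definition vv :: "nat \<Rightarrow> (nat \<Rightarrow> nat \<Rightarrow> nat \<Rightarrow> real) \<Rightarrow> (nat \<Rightarrow> nat) \<Rightarrow> complex \<Rightarrow> nat \<Rightarrow> complex" where
  "vv M A p z = (THE w. (\<forall>i\<ge>M. w i = 0)
      \<and> is_right_eigvec M (GammaA A z) (delta M (GammaA A z)) w
      \<and> (\<Sum>i<M. mu M A p z i * w i) = 1)"

definition omega :: "nat \<Rightarrow> complex" where
  "omega tau = exp (2 * of_real pi * \<i> / of_nat tau)"

end

theory Submission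
  imports Defs "Jordan_Normal_Form.Spectral_Radius"
begin


primrec pfpow :: "nat \<Rightarrow> (nat \<Rightarrow> nat \<Rightarrow> 'a::comm_semiring_1) \<Rightarrow> nat \<Rightarrow> nat \<Rightarrow> nat \<Rightarrow> 'a" where
  "pfpow M B 0 i j = (if i = j then 1 else 0)"
| "pfpow M B (Suc k) i j = (\<Sum>l<M. pfpow M B k i l * B l j)"

definition tomat :: "nat \<Rightarrow> (nat \<Rightarrow> nat \<Rightarrow> complex) \<Rightarrow> complex mat" where
  "tomat M B = mat M M (\<lambda>(i,j). B i j)"

lemma tomat_carrier: "tomat M B \<in> carrier_mat M M"
  by (simp add: tomat_def)

lemma tomat_pow: "i < M \<Longrightarrow> j < M \<Longrightarrow> (tomat M B ^\<^sub>m k) $$ (i,j) = pfpow M B k i j"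
proof (induction k arbitrary: j)
  case 0
  then show ?case by (simp add: tomat_def)
next
  case (Suc k)
  have "(tomat M B ^\<^sub>m Suc k) $$ (i,j) = Matrix.row (tomat M B ^\<^sub>m k) i \<bullet> col (tomat M B) j"
    using Suc.prems by (simp add: tomat_def)
  also have "\<dots> = (\<Sum>l<M. pfpow M B k i l * B l j)"
    unfolding scalar_prod_def using Suc by (auto simp: tomat_def atLeast0LessThan intro!: sum.cong)
  finally show ?case by simp
qed

lemma tomat_eigenvalue: "eigenvalue (tomat M B) lam \<longleftrightarrow> is_eigenvalue M B lam"
proof
  assume "eigenvalue (tomat M B) lam"
  then obtain v where v: "v \<in> carrier_vec M" "v \<noteq> 0\<^sub>v M" "tomat M B *\<^sub>v v = lam \<cdot>\<^sub>v v"
    unfolding eigenvalue_def eigenvector_def by (auto simp: tomat_def)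
  from v(1,2) obtain i where i: "i < M" "v $ i \<noteq> 0" by (metis carrier_vecD eq_vecI index_zero_vec)
  show "is_eigenvalue M B lam" unfolding is_eigenvalue_def
  proof (intro exI[of _ "\<lambda>i. v $ i"] conjI allI impI)
    show "\<exists>i<M. v $ i \<noteq> 0" using i by auto
    fix i assume i: "i < M"
    have "(tomat M B *\<^sub>v v) $ i = (lam \<cdot>\<^sub>v v) $ i" using v(3) by simp
    then show "(\<Sum>j<M. B i j * v $ j) = lam * v $ i"
      using i v(1) by (simp add: tomat_def scalar_prod_def atLeast0LessThan)
  qed
next
  assume "is_eigenvalue M B lam"
  then obtain v where v: "\<exists>i<M. v i \<noteq> 0" "\<forall>i<M. (\<Sum>j<M. B i j * v j) = lam * v i"
    unfolding is_eigenvalue_def by auto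
  show "eigenvalue (tomat M B) lam" unfolding eigenvalue_def eigenvector_def
  proof (intro exI[of _ "vec M v"] conjI)
    show "vec M v \<in> carrier_vec (dim_row (tomat M B))" by (simp add: tomat_def)
    show "vec M v \<noteq> 0\<^sub>v (dim_row (tomat M B))" using v(1) by (auto simp: tomat_def vec_eq_iff)
    show "tomat M B *\<^sub>v vec M v = lam \<cdot>\<^sub>v vec M v"
      using v(2) by (auto simp: tomat_def scalar_prod_def atLeast0LessThan vec_eq_iff)
  qed
qed

lemma J1: assumes "M > 0"
  shows "\<exists>lam0. is_eigenvalue M B lam0 \<and> (\<forall>lam. is_eigenvalue M B lam \<longrightarrow> cmod lam \<le> cmod lam0)"
proof -
  from spectral_radius_mem_max(1)[OF tomat_carrier assms, of B]
  obtain lam0 where l0: "eigenvalue (tomat M B) lam0" "spectral_radius (tomat M B) = cmod lam0"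
    unfolding spectrum_def by auto
  show ?thesis
  proof (intro exI[of _ lam0] conjI allI impI)
    show "is_eigenvalue M B lam0" using l0 tomat_eigenvalue by auto
    fix lam assume "is_eigenvalue M B lam"
    then have "cmod lam \<in> cmod ` spectrum (tomat M B)" using tomat_eigenvalue unfolding spectrum_def by auto
    from spectral_radius_mem_max(2)[OF tomat_carrier assms this] l0 show "cmod lam \<le> cmod lam0" by simp
  qed
qed

lemma J2: assumes "M > 0" and "\<And>lam. is_eigenvalue M B lam \<Longrightarrow> cmod lam < 1"
  shows "\<exists>c. \<forall>k i j. i < M \<longrightarrow> j < M \<longrightarrow> cmod (pfpow M B k i j) \<le> c"
proof -
  from spectral_radius_mem_max(1)[OF tomat_carrier assms(1), of B]
  obtain lam0 where l0: "eigenvalue (tomat M B) lam0" "spectral_radius (tomat M B) = cmod lam0"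
    unfolding spectrum_def by auto
  have "spectral_radius (tomat M B) < 1" using l0 assms(2) tomat_eigenvalue by auto
  from spectral_radius_jnf_norm_bound_less_1_upper_triangular[OF tomat_carrier this]
  obtain c where c: "\<forall>k. norm_bound (tomat M B ^\<^sub>m k) c" by auto
  show ?thesis
  proof (intro exI[of _ c] allI impI)
    fix k i j assume ij: "i < M" "j < M"
    from c have "norm_bound (tomat M B ^\<^sub>m k) c" by auto
    then have "cmod ((tomat M B ^\<^sub>m k) $$ (i,j)) \<le> c" unfolding norm_bound_def
      using ij tomat_carrier[of M B] by auto
    then show "cmod (pfpow M B k i j) \<le> c" using tomat_pow[OF ij] by simp
  qed
qed



definition pfmv :: "nat \<Rightarrow> (nat \<Rightarrow> nat \<Rightarrow> real) \<Rightarrow> (nat \<Rightarrow> real) \<Rightarrow> nat \<Rightarrow> real" where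
  "pfmv M P x i = (\<Sum>j<M. P i j * x j)"

primrec lit :: "nat \<Rightarrow> (nat \<Rightarrow> nat \<Rightarrow> real) \<Rightarrow> nat \<Rightarrow> (nat \<Rightarrow> real) \<Rightarrow> nat \<Rightarrow> real" where
  "lit M R 0 x = x"
| "lit M R (Suc k) x = pfmv M R (lit M R k x)"

definition pfE :: "nat \<Rightarrow> (nat \<Rightarrow> nat \<Rightarrow> real) \<Rightarrow> nat \<Rightarrow> nat \<Rightarrow> bool" where
  "pfE M R a b = (a < M \<and> b < M \<and> R a b > 0)"

definition nonnegm :: "nat \<Rightarrow> (nat \<Rightarrow> nat \<Rightarrow> real) \<Rightarrow> bool" where
  "nonnegm M R = (\<forall>i j. i < M \<longrightarrow> j < M \<longrightarrow> 0 \<le> R i j)"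

definition irred :: "nat \<Rightarrow> (nat \<Rightarrow> nat \<Rightarrow> real) \<Rightarrow> bool" where
  "irred M R = (\<forall>i j. i < M \<longrightarrow> j < M \<longrightarrow> (pfE M R)\<^sup>*\<^sup>* i j)"

lemma pfpow_nonneg: "nonnegm M R \<Longrightarrow> j < M \<Longrightarrow> 0 \<le> pfpow M R k i j"
  by (induction k arbitrary: j) (auto simp: nonnegm_def intro!: sum_nonneg)

lemma pfpow_Suc_mv: "pfmv M (pfpow M R (Suc k)) x i = pfmv M (pfpow M R k) (pfmv M R x) i"
proof -
  have "pfmv M (pfpow M R (Suc k)) x i = (\<Sum>j<M. \<Sum>l<M. pfpow M R k i l * R l j * x j)"
    by (simp add: pfmv_def sum_distrib_right)
  also have "\<dots> = (\<Sum>l<M. \<Sum>j<M. pfpow M R k i l * R l j * x j)" by (rule sum.swap)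
  also have "\<dots> = pfmv M (pfpow M R k) (pfmv M R x) i"
    by (simp add: pfmv_def sum_distrib_left mult.assoc)
  finally show ?thesis .
qed

lemma pfmv_mono: "nonnegm M R \<Longrightarrow> i < M \<Longrightarrow> (\<And>j. j < M \<Longrightarrow> x j \<le> y j) \<Longrightarrow> pfmv M R x i \<le> pfmv M R y i"
  unfolding pfmv_def nonnegm_def by (auto intro!: sum_mono mult_left_mono)

lemma lit_nonneg: "nonnegm M R \<Longrightarrow> (\<And>j. j < M \<Longrightarrow> 0 \<le> x j) \<Longrightarrow> i < M \<Longrightarrow> 0 \<le> lit M R k x i"
  by (induction k arbitrary: i) (auto simp: pfmv_def nonnegm_def intro!: sum_nonneg)

lemma lit_pos:
  assumes nn: "nonnegm M R" and x: "\<And>j. j < M \<Longrightarrow> 0 \<le> x j" and xj: "x j > 0"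
  shows "((pfE M R) ^^ k) i j \<Longrightarrow> lit M R k x i > 0"
proof (induction k arbitrary: i)
  case 0
  then show ?case using xj by simp
next
  case (Suc k)
  then obtain a where ia: "pfE M R i a" and aj: "((pfE M R) ^^ k) a j"
    by (metis relpowp_Suc_D2)
  have pos: "lit M R k x a > 0" using Suc.IH aj by auto
  have i: "i < M" and a: "a < M" and Ria: "R i a > 0" using ia by (auto simp: pfE_def)
  have "R i a * lit M R k x a \<le> (\<Sum>l<M. R i l * lit M R k x l)"
    using a i nn lit_nonneg[OF nn x]
    by (intro member_le_sum) (auto simp: nonnegm_def)
  moreover have "R i a * lit M R k x a > 0" using pos Ria by simp
  ultimately show ?case by (simp add: pfmv_def)
qed

lemma lit_diff:
  "lit M R (Suc k) x i - r * lit M R k x i = lit M R k (\<lambda>i. pfmv M R x i - r * x i) i"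
proof (induction k arbitrary: i)
  case 0
  then show ?case by simp
next
  case (Suc k)
  have "lit M R (Suc (Suc k)) x i - r * lit M R (Suc k) x i
      = (\<Sum>l<M. R i l * (lit M R (Suc k) x l - r * lit M R k x l))"
    by (simp add: pfmv_def sum_distrib_left algebra_simps sum_subtractf)
  also have "\<dots> = lit M R (Suc k) (\<lambda>i. pfmv M R x i - r * x i) i"
    using Suc.IH by (simp add: pfmv_def)
  finally show ?case .
qed

lemma propagate:
  assumes nn: "nonnegm M R" and irr: "irred M R"
    and x: "\<And>j. j < M \<Longrightarrow> 0 \<le> x j" and eq: "\<And>i. i < M \<Longrightarrow> pfmv M R x i = r * x i"
    and k: "k < M" "x k = 0" and j: "j < M"
  shows "x j = 0"
proof -
  have "(pfE M R)\<^sup>*\<^sup>* k j" using irr k j by (auto simp: irred_def)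
  then show ?thesis
  proof (induction rule: rtranclp_induct)
    case base
    then show ?case using k by simp
  next
    case (step a b)
    then have a: "a < M" and b: "b < M" and Rab: "R a b > 0" by (auto simp: pfE_def)
    have "(\<Sum>l<M. R a l * x l) = 0" using eq[OF a] step.IH by (simp add: pfmv_def)
    then have "\<forall>l\<in>{..<M}. R a l * x l = 0"
      using nn x a by (subst (asm) sum_nonneg_eq_0_iff) (auto simp: nonnegm_def)
    then have "R a b * x b = 0" using b by auto
    then show ?case using Rab by simp
  qed
qed



lemma pfpow0_mv: assumes i: "i < M" shows "pfmv M (pfpow M R 0) x i = x i"
proof -
  have "pfmv M (pfpow M R 0) x i = (\<Sum>j<M. if i = j then x i else 0)"
    unfolding pfmv_def by (rule sum.cong) auto
  then show ?thesis using i by simp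
qed

lemma pfpow_scale:
  assumes s: "s \<noteq> 0"
  shows "complex_of_real (pfpow M R k i j) = complex_of_real s ^ k * pfpow M (\<lambda>i j. complex_of_real (R i j) / complex_of_real s) k i j"
proof (induction k arbitrary: j)
  case 0
  then show ?case by simp
next
  case (Suc k)
  have "complex_of_real (pfpow M R (Suc k) i j) = (\<Sum>l<M. complex_of_real (pfpow M R k i l) * complex_of_real (R l j))"
    by simp
  also have "\<dots> = (\<Sum>l<M. complex_of_real s ^ Suc k * (pfpow M (\<lambda>i j. complex_of_real (R i j) / complex_of_real s) k i l * (complex_of_real (R l j) / complex_of_real s)))"
    using Suc.IH s by (intro sum.cong) (auto simp: field_simps)
  also have "\<dots> = complex_of_real s ^ Suc k * pfpow M (\<lambda>i j. complex_of_real (R i j) / complex_of_real s) (Suc k) i j"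
    by (simp add: sum_distrib_left)
  finally show ?case .
qed

lemma growth_contra:
  assumes M: "M > 0" and nn: "nonnegm M R"
    and zp: "\<And>i. i < M \<Longrightarrow> z i > 0"
    and grow: "\<And>i. i < M \<Longrightarrow> pfmv M R z i \<ge> (r + e) * z i"
    and e: "e > 0" and r: "r \<ge> 0"
    and bnd: "\<And>lam. is_eigenvalue M (\<lambda>i j. complex_of_real (R i j)) lam \<Longrightarrow> cmod lam \<le> r"
  shows False
proof -
  define s where "s = r + e / 2"
  have s: "s > 0" "r < s" "s < r + e" using e r by (auto simp: s_def)
  define B where "B = (\<lambda>i j. complex_of_real (R i j) / complex_of_real s)"
  have "\<exists>c. \<forall>k i j. i < M \<longrightarrow> j < M \<longrightarrow> cmod (pfpow M B k i j) \<le> c"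
  proof (rule J2[OF M])
    fix mu assume "is_eigenvalue M B mu"
    then obtain v where v: "\<exists>i<M. v i \<noteq> 0" "\<forall>i<M. (\<Sum>j<M. B i j * v j) = mu * v i"
      unfolding is_eigenvalue_def by auto
    have "is_eigenvalue M (\<lambda>i j. complex_of_real (R i j)) (complex_of_real s * mu)"
      unfolding is_eigenvalue_def
    proof (intro exI[of _ v] conjI allI impI)
      show "\<exists>i<M. v i \<noteq> 0" by fact
      fix i assume i: "i < M"
      have "(\<Sum>j<M. complex_of_real (R i j) * v j) = complex_of_real s * (\<Sum>j<M. B i j * v j)"
        using s by (simp add: B_def sum_distrib_left field_simps)
      also have "\<dots> = complex_of_real s * mu * v i" using v(2) i by simp
      finally show "(\<Sum>j<M. complex_of_real (R i j) * v j) = complex_of_real s * mu * v i" .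
    qed
    from bnd[OF this] have "s * cmod mu \<le> r" using s by (simp add: norm_mult)
    then have "s * cmod mu < s * 1" using s by linarith
    then show "cmod mu < 1" using s by (simp only: mult_less_cancel_left_pos)
  qed
  then obtain c where c: "\<And>k i j. i < M \<Longrightarrow> j < M \<Longrightarrow> cmod (pfpow M B k i j) \<le> c" by blast
  have absb: "\<bar>pfpow M R k i j\<bar> \<le> s ^ k * c" if "i < M" "j < M" for k i j
  proof -
    have "complex_of_real (pfpow M R k i j) = complex_of_real s ^ k * pfpow M B k i j"
      unfolding B_def by (rule pfpow_scale) (use s in auto)
    then have "cmod (complex_of_real (pfpow M R k i j)) = cmod (complex_of_real s ^ k * pfpow M B k i j)"
      by simp
    then have "\<bar>pfpow M R k i j\<bar> = s ^ k * cmod (pfpow M B k i j)"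
      using s by (simp add: norm_mult norm_power)
    also have "\<dots> \<le> s ^ k * c" using c[OF that] s by (intro mult_left_mono) auto
    finally show ?thesis .
  qed
  have gr: "pfmv M (pfpow M R k) z i \<ge> (r + e) ^ k * z i" if "i < M" for k i
    using that
  proof (induction k arbitrary: i)
    case 0
    then show ?case using pfpow0_mv[of i M R z] by (simp del: pfpow.simps)
  next
    case (Suc k)
    have nnk: "nonnegm M (pfpow M R k)" using pfpow_nonneg[OF nn] by (auto simp: nonnegm_def)
    have "(r + e) ^ Suc k * z i = (r + e) * ((r + e) ^ k * z i)" by simp
    also have "\<dots> \<le> (r + e) * pfmv M (pfpow M R k) z i" using Suc e r by (intro mult_left_mono) auto
    also have "\<dots> = pfmv M (pfpow M R k) (\<lambda>j. (r + e) * z j) i"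
      by (simp add: pfmv_def sum_distrib_left mult_ac)
    also have "\<dots> \<le> pfmv M (pfpow M R k) (pfmv M R z) i"
      using grow by (intro pfmv_mono[OF nnk Suc.prems]) auto
    also have "\<dots> = pfmv M (pfpow M R (Suc k)) z i" by (simp add: pfpow_Suc_mv)
    finally show ?case .
  qed
  define S where "S = (\<Sum>j<M. z j)"
  have up: "pfmv M (pfpow M R k) z 0 \<le> s ^ k * (c * S)" for k
  proof -
    have "pfmv M (pfpow M R k) z 0 \<le> (\<Sum>j<M. s ^ k * c * z j)"
      unfolding pfmv_def
    proof (intro sum_mono)
      fix j assume j: "j \<in> {..<M}"
      have "pfpow M R k 0 j * z j \<le> \<bar>pfpow M R k 0 j\<bar> * z j" using zp[of j] j by (intro mult_right_mono) auto
      also have "\<dots> \<le> s ^ k * c * z j" using absb[of 0 j k] M j zp[of j] by (intro mult_right_mono) auto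
      finally show "pfpow M R k 0 j * z j \<le> s ^ k * c * z j" .
    qed
    also have "\<dots> = s ^ k * (c * S)" by (simp add: S_def sum_distrib_left mult_ac)
    finally show ?thesis .
  qed
  define q where "q = (r + e) / s"
  have q: "q > 1" using s by (simp add: q_def)
  obtain n where n: "c * S / z 0 < q ^ n" using real_arch_pow[OF q] by blast
  have "(r + e) ^ n * z 0 \<le> s ^ n * (c * S)" using gr[of 0 n] up[of n] M by linarith
  then have "q ^ n * z 0 \<le> c * S" using s by (simp add: q_def power_divide field_simps)
  then have "q ^ n \<le> c * S / z 0" using zp[OF M] by (simp add: field_simps)
  then show False using n by simp
qed



lemma PF_pos:
  assumes M: "M > 0" and nn: "nonnegm M R" and irr: "irred M R"
  shows "\<exists>r v. r \<ge> 0 \<and> (\<forall>i<M. v i > 0) \<and> (\<forall>i<M. pfmv M R v i = r * v i)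
     \<and> (\<forall>lam. is_eigenvalue M (\<lambda>i j. complex_of_real (R i j)) lam \<longrightarrow> cmod lam \<le> r)"
proof -
  define X where "X = (\<lambda>i j. complex_of_real (R i j))"
  obtain lam0 where l0: "is_eigenvalue M X lam0" and bnd: "\<And>lam. is_eigenvalue M X lam \<Longrightarrow> cmod lam \<le> cmod lam0"
    using J1[OF M, of X] by blast
  from l0 obtain w where w1: "\<exists>i<M. w i \<noteq> 0" and w2: "\<And>i. i < M \<Longrightarrow> (\<Sum>j<M. X i j * w j) = lam0 * w i"
    unfolding is_eigenvalue_def by blast
  define r where "r = cmod lam0"
  define z where "z = (\<lambda>i. cmod (w i))"
  have r0: "r \<ge> 0" by (simp add: r_def)
  have z0: "\<And>j. j < M \<Longrightarrow> 0 \<le> z j" by (simp add: z_def)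
  obtain j0 where j0: "j0 < M" "z j0 > 0" using w1 by (auto simp: z_def)
  have zge: "r * z i \<le> pfmv M R z i" if i: "i < M" for i
  proof -
    have "r * z i = cmod (\<Sum>j<M. X i j * w j)" using w2[OF i] by (simp add: r_def z_def norm_mult)
    also have "\<dots> \<le> (\<Sum>j<M. cmod (X i j * w j))" by (rule norm_sum)
    also have "\<dots> = pfmv M R z i" unfolding pfmv_def
      using nn i by (intro sum.cong) (auto simp: X_def z_def norm_mult nonnegm_def)
    finally show ?thesis .
  qed
  show ?thesis
  proof (cases "\<forall>i<M. pfmv M R z i = r * z i")
    case True
    have "\<forall>i<M. z i > 0"
    proof (intro allI impI)
      fix i assume i: "i < M"
      show "z i > 0"
      proof (rule ccontr)
        assume "\<not> z i > 0"
        then have "z i = 0" using z0[OF i] by simp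
        have eq: "\<And>i. i < M \<Longrightarrow> pfmv M R z i = r * z i" using True by auto
        have "z j0 = 0" using propagate[OF nn irr z0 eq i \<open>z i = 0\<close> j0(1)] .
        then show False using j0 by simp
      qed
    qed
    then show ?thesis using True r0 bnd unfolding X_def r_def by blast
  next
    case False
    then obtain i0 where i0: "i0 < M" "pfmv M R z i0 \<noteq> r * z i0" by blast
    define d where "d = (\<lambda>i. pfmv M R z i - r * z i)"
    have d0: "\<And>j. j < M \<Longrightarrow> 0 \<le> d j" using zge by (simp add: d_def)
    have di0: "d i0 > 0" using zge[OF i0(1)] i0(2) by (simp add: d_def)
    have "\<forall>i\<in>{..<M}. \<exists>k. ((pfE M R) ^^ k) i i0" using irr i0 by (auto simp: irred_def rtranclp_power)
    then obtain f where f: "\<And>i. i < M \<Longrightarrow> ((pfE M R) ^^ f i) i i0" by (metis bchoice lessThan_iff)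
    have "\<forall>i\<in>{..<M}. \<exists>k. ((pfE M R) ^^ k) i j0" using irr j0 by (auto simp: irred_def rtranclp_power)
    then obtain g where g: "\<And>i. i < M \<Longrightarrow> ((pfE M R) ^^ g i) i j0" by (metis bchoice lessThan_iff)
    define N where "N = Suc (Max ((f ` {..<M}) \<union> (g ` {..<M})))"
    have fN: "f i < N" if "i < M" for i
      using that unfolding N_def by (simp add: le_imp_less_Suc)
    have gN: "g i < N" if "i < M" for i
      using that unfolding N_def by (simp add: le_imp_less_Suc)
    define z' where "z' = (\<lambda>i. \<Sum>k<N. lit M R k z i)"
    have z'pos: "z' i > 0" if i: "i < M" for i
      unfolding z'_def
      by (rule sum_pos2[of _ "g i"]) (use gN[OF i] lit_pos[where x=z, OF nn z0 j0(2) g[OF i]] lit_nonneg[where x=z, OF nn z0 i] in auto)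
    have Rz': "pfmv M R z' i = (\<Sum>k<N. lit M R (Suc k) z i)" for i
    proof -
      have "pfmv M R z' i = (\<Sum>j<M. \<Sum>k<N. R i j * lit M R k z j)"
        by (simp add: pfmv_def z'_def sum_distrib_left)
      also have "\<dots> = (\<Sum>k<N. \<Sum>j<M. R i j * lit M R k z j)" by (rule sum.swap)
      finally show ?thesis by (simp add: pfmv_def)
    qed
    have diffpos: "pfmv M R z' i - r * z' i > 0" if i: "i < M" for i
    proof -
      have "pfmv M R z' i - r * z' i = (\<Sum>k<N. lit M R (Suc k) z i - r * lit M R k z i)"
        unfolding Rz' by (simp add: z'_def sum_distrib_left sum_subtractf)
      also have "\<dots> = (\<Sum>k<N. lit M R k d i)" unfolding d_def by (rule sum.cong[OF refl], rule lit_diff)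
      also have "\<dots> > 0"
        by (rule sum_pos2[of _ "f i"]) (use fN[OF i] lit_pos[where x=d, OF nn d0 di0 f[OF i]] lit_nonneg[where x=d, OF nn d0 i] in auto)
      finally show ?thesis .
    qed
    define e where "e = Min ((\<lambda>i. (pfmv M R z' i - r * z' i) / z' i) ` {..<M})"
    have e: "e > 0" unfolding e_def using M diffpos z'pos by (subst Min_gr_iff) auto
    have grow: "(r + e) * z' i \<le> pfmv M R z' i" if i: "i < M" for i
    proof -
      have "e \<le> (pfmv M R z' i - r * z' i) / z' i" unfolding e_def using i by (intro Min_le) auto
      then have "e * z' i \<le> pfmv M R z' i - r * z' i" using z'pos[OF i] by (simp add: field_simps)
      then show ?thesis by (simp add: algebra_simps)
    qed
    have False
      by (rule growth_contra[OF M nn z'pos grow e r0]) (use bnd in \<open>auto simp: X_def r_def\<close>)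
    then show ?thesis ..
  qed
qed



lemma real_eig_unique:
  assumes nn: "nonnegm M R" and irr: "irred M R"
    and vp: "\<And>i. i < M \<Longrightarrow> v i > 0" and ev: "\<And>i. i < M \<Longrightarrow> pfmv M R v i = r * v i"
    and ex: "\<And>i. i < M \<Longrightarrow> pfmv M R x i = r * x i"
  shows "\<exists>c. \<forall>i<M. x i = c * v i"
proof (cases "M = 0")
  case True
  then show ?thesis by auto
next
  case False
  define c where "c = Min ((\<lambda>i. x i / v i) ` {..<M})"
  have "c \<in> (\<lambda>i. x i / v i) ` {..<M}"
    unfolding c_def using False by (intro Min_in) auto
  then obtain k where k: "k < M" "x k / v k = c" by auto
  define y where "y = (\<lambda>i. x i - c * v i)"
  have y0: "0 \<le> y j" if j: "j < M" for j
  proof -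
    have "c \<le> x j / v j" unfolding c_def using j by (intro Min_le) auto
    then show ?thesis using vp[OF j] by (simp add: y_def field_simps)
  qed
  have yk: "y k = 0" using k vp[OF k(1)] by (simp add: y_def field_simps)
  have ey: "pfmv M R y i = r * y i" if i: "i < M" for i
  proof -
    have "pfmv M R y i = pfmv M R x i - c * pfmv M R v i"
      by (simp add: pfmv_def y_def algebra_simps sum_subtractf sum_distrib_left)
    then show ?thesis using ex[OF i] ev[OF i] by (simp add: y_def algebra_simps)
  qed
  have "\<forall>i<M. x i = c * v i"
  proof (intro allI impI)
    fix i assume i: "i < M"
    have "y i = 0" by (rule propagate[OF nn irr y0 ey k(1) yk i])
    then show "x i = c * v i" by (simp add: y_def)
  qed
  then show ?thesis by blast
qed

lemma complex_eig_unique: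
  assumes nn: "nonnegm M R" and irr: "irred M R"
    and vp: "\<And>i. i < M \<Longrightarrow> v i > 0" and ev: "\<And>i. i < M \<Longrightarrow> pfmv M R v i = r * v i"
    and w: "\<And>i. i < M \<Longrightarrow> (\<Sum>j<M. complex_of_real (R i j) * w j) = complex_of_real r * w i"
  shows "\<exists>c. \<forall>i<M. w i = c * complex_of_real (v i)"
proof -
  have "\<exists>a. \<forall>i<M. Re (w i) = a * v i"
  proof (rule real_eig_unique[OF nn irr vp ev])
    fix i assume i: "i < M"
    have "Re (\<Sum>j<M. complex_of_real (R i j) * w j) = Re (complex_of_real r * w i)" using w[OF i] by simp
    then show "pfmv M R (\<lambda>i. Re (w i)) i = r * Re (w i)" by (simp add: pfmv_def Re_sum)
  qed
  then obtain a where a: "\<And>i. i < M \<Longrightarrow> Re (w i) = a * v i" by blast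
  have "\<exists>b. \<forall>i<M. Im (w i) = b * v i"
  proof (rule real_eig_unique[OF nn irr vp ev])
    fix i assume i: "i < M"
    have "Im (\<Sum>j<M. complex_of_real (R i j) * w j) = Im (complex_of_real r * w i)" using w[OF i] by simp
    then show "pfmv M R (\<lambda>i. Im (w i)) i = r * Im (w i)" by (simp add: pfmv_def Im_sum)
  qed
  then obtain b where b: "\<And>i. i < M \<Longrightarrow> Im (w i) = b * v i" by blast
  show ?thesis
    by (rule exI[of _ "Complex a b"]) (auto simp: complex_eq_iff a b)
qed

lemma irred_transpose: "irred M R \<Longrightarrow> irred M (\<lambda>i j. R j i)"
proof -
  assume irr: "irred M R"
  have conv: "(pfE M R)\<^sup>*\<^sup>* a b \<Longrightarrow> (pfE M (\<lambda>i j. R j i))\<^sup>*\<^sup>* b a" for a b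
  proof (induction rule: rtranclp_induct)
    case base then show ?case by simp
  next
    case (step y z)
    then have "pfE M (\<lambda>i j. R j i) z y" by (auto simp: pfE_def)
    then show ?case using step.IH by (meson converse_rtranclp_into_rtranclp)
  qed
  show ?thesis unfolding irred_def using irr conv by (auto simp: irred_def)
qed

lemma nonnegm_transpose: "nonnegm M R \<Longrightarrow> nonnegm M (\<lambda>i j. R j i)"
  by (auto simp: nonnegm_def)



lemma PF_final:
  assumes M: "M > 0" and nn: "nonnegm M R" and irr: "irred M R"
  defines "X \<equiv> (\<lambda>i j. complex_of_real (R i j))"
  shows "\<exists>!u. (\<forall>i\<ge>M. u i = 0) \<and> is_left_eigvec M X (delta M X) u \<and> (\<Sum>i<M. u i) = 1"
    and "\<And>U. (\<forall>i\<ge>M. U i = 0) \<and> is_left_eigvec M X (delta M X) U \<and> (\<Sum>i<M. U i) = 1 \<Longrightarrow>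
          \<exists>!w. (\<forall>i\<ge>M. w i = 0) \<and> is_right_eigvec M X (delta M X) w \<and> (\<Sum>i<M. U i * w i) = 1"
proof -
  define Rt where "Rt = (\<lambda>i j. R j i)"
  obtain r v where r0: "r \<ge> 0" and vp: "\<And>i. i < M \<Longrightarrow> v i > 0"
    and ev: "\<And>i. i < M \<Longrightarrow> pfmv M R v i = r * v i"
    and bnd: "\<And>lam. is_eigenvalue M X lam \<Longrightarrow> cmod lam \<le> r"
    using PF_pos[OF M nn irr] unfolding X_def by blast
  obtain r' u where up: "\<And>i. i < M \<Longrightarrow> u i > 0"
    and eu: "\<And>i. i < M \<Longrightarrow> pfmv M Rt u i = r' * u i"
    using PF_pos[OF M nonnegm_transpose[OF nn] irred_transpose[OF irr]] unfolding Rt_def by blast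
  have nnt: "nonnegm M Rt" and irrt: "irred M Rt"
    unfolding Rt_def by (rule nonnegm_transpose[OF nn], rule irred_transpose[OF irr])
  define P where "P = (\<Sum>i<M. u i * v i)"
  have P: "P > 0" unfolding P_def using M up vp by (intro sum_pos) (auto intro: mult_pos_pos)
  have "(\<Sum>i<M. u i * pfmv M R v i) = (\<Sum>j<M. pfmv M Rt u j * v j)"
  proof -
    have "(\<Sum>i<M. u i * pfmv M R v i) = (\<Sum>i<M. \<Sum>j<M. u i * R i j * v j)"
      by (simp add: pfmv_def sum_distrib_left mult.assoc)
    also have "\<dots> = (\<Sum>j<M. \<Sum>i<M. u i * R i j * v j)" by (rule sum.swap)
    also have "\<dots> = (\<Sum>j<M. pfmv M Rt u j * v j)"
      unfolding pfmv_def Rt_def by (simp add: sum_distrib_left sum_distrib_right mult_ac)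
    finally show ?thesis .
  qed
  then have "r * P = r' * P" using ev eu unfolding P_def
    by (simp add: sum_distrib_left mult_ac)
  then have rr: "r' = r" using P by simp
  have evr: "is_eigenvalue M X (complex_of_real r)" unfolding is_eigenvalue_def
  proof (intro exI[of _ "\<lambda>i. complex_of_real (v i)"] conjI allI impI)
    show "\<exists>i<M. complex_of_real (v i) \<noteq> 0" using M vp[of 0] by auto
    fix i assume i: "i < M"
    have "(\<Sum>j<M. X i j * complex_of_real (v j)) = complex_of_real (pfmv M R v i)"
      by (simp add: X_def pfmv_def)
    then show "(\<Sum>j<M. X i j * complex_of_real (v j)) = complex_of_real r * complex_of_real (v i)"
      using ev[OF i] by simp
  qed
  have dl: "delta M X = complex_of_real r"
    unfolding delta_def
  proof (rule the_equality)
    show "is_eigenvalue M X (complex_of_real r) \<and>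
      (\<forall>m. is_eigenvalue M X m \<longrightarrow> cmod m \<le> cmod (complex_of_real r)) \<and>
      0 \<le> Arg (complex_of_real r) \<and>
      (\<forall>m. is_eigenvalue M X m \<longrightarrow> cmod m = cmod (complex_of_real r) \<longrightarrow> Re m \<le> Re (complex_of_real r))"
      using evr bnd r0 by (auto simp: Arg_of_real complex_Re_le_cmod)
  next
    fix lam assume H: "is_eigenvalue M X lam \<and>
      (\<forall>m. is_eigenvalue M X m \<longrightarrow> cmod m \<le> cmod lam) \<and> 0 \<le> Arg lam \<and>
      (\<forall>m. is_eigenvalue M X m \<longrightarrow> cmod m = cmod lam \<longrightarrow> Re m \<le> Re lam)"
    then have c1: "cmod lam = r" using bnd evr r0 by (metis abs_of_nonneg norm_of_real order_antisym)
    then have "r \<le> Re lam" using H evr r0 by auto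
    then have "Re lam = cmod lam" using c1 complex_Re_le_cmod[of lam] by linarith
    moreover have "(cmod lam)^2 = (Re lam)^2 + (Im lam)^2" by (rule cmod_power2)
    ultimately have "Im lam = 0" by simp
    then show "lam = complex_of_real r" using \<open>Re lam = cmod lam\<close> c1 by (simp add: complex_eq_iff)
  qed
  define Su where "Su = (\<Sum>i<M. u i)"
  have Su: "Su > 0" unfolding Su_def using M up by (intro sum_pos) auto
  define u0 where "u0 = (\<lambda>i. if i < M then complex_of_real (u i / Su) else 0)"
  define Py where "Py = (\<lambda>u'. (\<forall>i\<ge>M. u' i = 0) \<and> is_left_eigvec M X (delta M X) u' \<and> (\<Sum>i<M. u' i) = 1)"
  have Pu0: "Py u0" unfolding Py_def is_left_eigvec_def dl
  proof (intro conjI allI impI)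
    show "\<exists>i<M. u0 i \<noteq> 0" using M up[of 0] Su by (intro exI[of _ 0]) (auto simp: u0_def)
    fix j assume j: "j < M"
    have "(\<Sum>i<M. u0 i * X i j) = complex_of_real (pfmv M Rt u j / Su)"
      by (simp add: u0_def X_def pfmv_def Rt_def sum_divide_distrib mult_ac)
    then show "(\<Sum>i<M. u0 i * X i j) = complex_of_real r * u0 j"
      using eu[OF j] rr j by (simp add: u0_def)
  next
    show "(\<Sum>i<M. u0 i) = 1" using Su by (simp add: u0_def Su_def sum_divide_distrib[symmetric] flip: of_real_sum)
  qed (simp add: u0_def)
  have uniq: "u1 = u0" if "Py u1" for u1
  proof -
    from that have z: "\<And>i. i \<ge> M \<Longrightarrow> u1 i = 0" and l: "is_left_eigvec M X (complex_of_real r) u1"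
      and s: "(\<Sum>i<M. u1 i) = 1" unfolding Py_def dl by auto
    have "\<exists>c. \<forall>i<M. u1 i = c * complex_of_real (u i)"
    proof (rule complex_eig_unique[OF nnt irrt up])
      show "\<And>i. i < M \<Longrightarrow> pfmv M Rt u i = r * u i" using eu rr by simp
      fix i assume i: "i < M"
      show "(\<Sum>j<M. complex_of_real (Rt i j) * u1 j) = complex_of_real r * u1 i"
        using l i unfolding is_left_eigvec_def by (simp add: X_def Rt_def mult_ac)
    qed
    then obtain c where c: "\<And>i. i < M \<Longrightarrow> u1 i = c * complex_of_real (u i)" by blast
    have "1 = (\<Sum>i<M. c * complex_of_real (u i))" using s c by simp
    also have "\<dots> = c * complex_of_real Su" by (simp add: Su_def sum_distrib_left)
    finally have cS: "c = 1 / complex_of_real Su" using Su by (simp add: field_simps)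
    show "u1 = u0"
    proof
      fix i show "u1 i = u0 i"
        using c cS z by (cases "i < M") (auto simp: u0_def)
    qed
  qed
  show "\<exists>!u. (\<forall>i\<ge>M. u i = 0) \<and> is_left_eigvec M X (delta M X) u \<and> (\<Sum>i<M. u i) = 1"
    using Pu0 uniq unfolding Py_def by blast
  fix U assume U: "(\<forall>i\<ge>M. U i = 0) \<and> is_left_eigvec M X (delta M X) U \<and> (\<Sum>i<M. U i) = 1"
  then have UU: "U = u0" using uniq unfolding Py_def by blast
  define K where "K = (\<Sum>i<M. u i * v i) / Su"
  have K: "K > 0" unfolding K_def using P Su P_def by simp
  define w0 where "w0 = (\<lambda>i. if i < M then complex_of_real (v i / K) else 0)"
  define Qy where "Qy = (\<lambda>w. (\<forall>i\<ge>M. w i = 0) \<and> is_right_eigvec M X (delta M X) w \<and> (\<Sum>i<M. U i * w i) = 1)"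
  have sumUv: "(\<Sum>i<M. U i * complex_of_real (v i)) = complex_of_real K"
    by (simp add: UU u0_def K_def sum_divide_distrib)
  have Qw0: "Qy w0" unfolding Qy_def is_right_eigvec_def dl
  proof (intro conjI allI impI)
    show "\<exists>i<M. w0 i \<noteq> 0" using M vp[of 0] K by (intro exI[of _ 0]) (auto simp: w0_def)
    fix i assume i: "i < M"
    have "(\<Sum>j<M. X i j * w0 j) = complex_of_real (pfmv M R v i / K)"
      by (simp add: w0_def X_def pfmv_def sum_divide_distrib)
    then show "(\<Sum>j<M. X i j * w0 j) = complex_of_real r * w0 i"
      using ev[OF i] i by (simp add: w0_def)
  next
    have "(\<Sum>i<M. U i * w0 i) = (\<Sum>i<M. U i * complex_of_real (v i)) / complex_of_real K"
      by (simp add: w0_def sum_divide_distrib)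
    then show "(\<Sum>i<M. U i * w0 i) = 1" using sumUv K by simp
  qed (simp add: w0_def)
  have wuniq: "w1 = w0" if "Qy w1" for w1
  proof -
    from that have z: "\<And>i. i \<ge> M \<Longrightarrow> w1 i = 0" and l: "is_right_eigvec M X (complex_of_real r) w1"
      and s: "(\<Sum>i<M. U i * w1 i) = 1" unfolding Qy_def dl by auto
    have "\<exists>c. \<forall>i<M. w1 i = c * complex_of_real (v i)"
    proof (rule complex_eig_unique[OF nn irr vp ev])
      fix i assume i: "i < M"
      show "(\<Sum>j<M. complex_of_real (R i j) * w1 j) = complex_of_real r * w1 i"
        using l i unfolding is_right_eigvec_def by (simp add: X_def)
    qed
    then obtain c where c: "\<And>i. i < M \<Longrightarrow> w1 i = c * complex_of_real (v i)" by blast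
    have "1 = (\<Sum>i<M. U i * (c * complex_of_real (v i)))" using s c by simp
    also have "\<dots> = c * (\<Sum>i<M. U i * complex_of_real (v i))" by (simp add: sum_distrib_left mult_ac)
    also have "\<dots> = c * complex_of_real K" using sumUv by simp
    finally have cS: "c = 1 / complex_of_real K" using K by (simp add: field_simps)
    show "w1 = w0"
    proof
      fix i show "w1 i = w0 i"
        using c cS z by (cases "i < M") (auto simp: w0_def)
    qed
  qed
  show "\<exists>!w. (\<forall>i\<ge>M. w i = 0) \<and> is_right_eigvec M X (delta M X) w \<and> (\<Sum>i<M. U i * w i) = 1"
    using Qw0 wuniq unfolding Qy_def by blast
qed



lemma sim_right:
  assumes hX: "\<And>i j. i < M \<Longrightarrow> j < M \<Longrightarrow> X' i j = d i * X i j * inverse (d j)"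
    and hd: "\<And>i. d i \<noteq> 0"
  shows "is_right_eigvec M X' lam w \<longleftrightarrow> is_right_eigvec M X lam (\<lambda>i. inverse (d i) * w i)"
proof -
  have eq: "(\<Sum>j<M. X' i j * w j) = d i * (\<Sum>j<M. X i j * (inverse (d j) * w j))" if i: "i < M" for i
    using i hX by (simp add: sum_distrib_left mult_ac)
  have "((\<Sum>j<M. X' i j * w j) = lam * w i) \<longleftrightarrow> ((\<Sum>j<M. X i j * (inverse (d j) * w j)) = lam * (inverse (d i) * w i))"
    if i: "i < M" for i
    using eq[OF i] hd[of i] by (auto simp: field_simps)
  moreover have "(w i \<noteq> 0) \<longleftrightarrow> (inverse (d i) * w i \<noteq> 0)" for i using hd[of i] by simp
  ultimately show ?thesis unfolding is_right_eigvec_def by auto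
qed

lemma sim_left:
  assumes hX: "\<And>i j. i < M \<Longrightarrow> j < M \<Longrightarrow> X' i j = d i * X i j * inverse (d j)"
    and hd: "\<And>i. d i \<noteq> 0"
  shows "is_left_eigvec M X' lam u \<longleftrightarrow> is_left_eigvec M X lam (\<lambda>i. u i * d i)"
proof -
  have eq: "(\<Sum>i<M. u i * X' i j) = (\<Sum>i<M. (u i * d i) * X i j) * inverse (d j)" if j: "j < M" for j
    using j hX by (simp add: sum_distrib_left sum_distrib_right mult_ac)
  have "((\<Sum>i<M. u i * X' i j) = lam * u j) \<longleftrightarrow> ((\<Sum>i<M. (u i * d i) * X i j) = lam * (u j * d j))"
    if j: "j < M" for j
    using eq[OF j] hd[of j] by (auto simp: field_simps)
  moreover have "(u i \<noteq> 0) \<longleftrightarrow> (u i * d i \<noteq> 0)" for i using hd[of i] by simp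
  ultimately show ?thesis unfolding is_left_eigvec_def by auto
qed

lemma eig_right: "is_eigenvalue M X lam \<longleftrightarrow> (\<exists>w. is_right_eigvec M X lam w)"
  unfolding is_eigenvalue_def is_right_eigvec_def by blast

lemma sim_eig:
  assumes hX: "\<And>i j. i < M \<Longrightarrow> j < M \<Longrightarrow> X' i j = d i * X i j * inverse (d j)"
    and hd: "\<And>i. d i \<noteq> 0"
  shows "is_eigenvalue M X' = is_eigenvalue M X"
proof
  fix lam
  show "is_eigenvalue M X' lam = is_eigenvalue M X lam"
  proof
    assume "is_eigenvalue M X' lam"
    then obtain w where "is_right_eigvec M X' lam w" using eig_right by blast
    then show "is_eigenvalue M X lam" using sim_right[where M=M and X'=X' and d=d and X=X, OF hX hd] eig_right by blast
  next
    assume "is_eigenvalue M X lam"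
    then obtain w where w: "is_right_eigvec M X lam w" using eig_right by blast
    have "(\<lambda>i. inverse (d i) * (d i * w i)) = w" using hd by (auto simp: field_simps)
    then have "is_right_eigvec M X' lam (\<lambda>i. d i * w i)" using sim_right[where M=M and X'=X' and d=d and X=X, OF hX hd] w by simp
    then show "is_eigenvalue M X' lam" using eig_right by blast
  qed
qed

lemma sim_delta:
  assumes hX: "\<And>i j. i < M \<Longrightarrow> j < M \<Longrightarrow> X' i j = d i * X i j * inverse (d j)"
    and hd: "\<And>i. d i \<noteq> 0"
  shows "delta M X' = delta M X"
  unfolding delta_def by (simp only: sim_eig[OF hX hd])

lemma the_transfer:
  assumes ex: "\<exists>!x. P x" and QP: "\<And>x. Q x \<longleftrightarrow> P (g x)"
    and gh: "\<And>x. g (h x) = x" and hg: "\<And>x. h (g x) = x"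
  shows "(THE x. Q x) = h (THE x. P x)" and "Q (THE x. Q x)"
proof -
  define x0 where "x0 = (THE x. P x)"
  have P0: "P x0" unfolding x0_def by (rule theI'[OF ex])
  have Qh: "Q (h x0)" using QP gh P0 by simp
  have un: "x = h x0" if "Q x" for x
  proof -
    have "P (g x)" using QP that by simp
    then have "g x = x0" using ex P0 by blast
    then have "h (g x) = h x0" by simp
    then show ?thesis using hg[of x] by simp
  qed
  show "(THE x. Q x) = h (THE x. P x)" unfolding x0_def[symmetric]
    by (rule the_equality) (use Qh un in blast)+
  then show "Q (THE x. Q x)" using Qh unfolding x0_def by simp
qed



lemma omega_pow_tau: "tau > 0 \<Longrightarrow> omega tau ^ tau = 1"
proof -
  assume t: "tau > 0"
  have "omega tau ^ tau = exp (of_nat tau * (2 * of_real pi * \<i> / of_nat tau))"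
    unfolding omega_def by (rule exp_of_nat_mult[symmetric])
  also have "of_nat tau * (2 * of_real pi * \<i> / of_nat tau) = 2 * of_real pi * \<i>" using t by simp
  finally show ?thesis by simp
qed

lemma norm_omega: "cmod (omega tau) = 1"
  unfolding omega_def by simp

lemma pow_mod_eq:
  fixes w :: complex
  assumes "w ^ tau = 1" "a mod tau = b mod tau"
  shows "w ^ a = w ^ b"
proof -
  have e: "w ^ (tau * q + r) = w ^ r" for q r using assms(1) by (simp add: power_add power_mult)
  have "w ^ a = w ^ (tau * (a div tau) + a mod tau)" by simp
  also have "\<dots> = w ^ (a mod tau)" by (rule e)
  also have "\<dots> = w ^ (b mod tau)" using assms(2) by simp
  also have "\<dots> = w ^ (tau * (b div tau) + b mod tau)" by (rule e[symmetric])
  also have "\<dots> = w ^ b" by simp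
  finally show ?thesis .
qed

lemma cong_shift:
  fixes k qi pj tau :: nat
  assumes "(int k - 1) mod int tau = (int pj - int qi) mod int tau"
  shows "(k + qi) mod tau = (1 + pj) mod tau"
proof -
  have "int tau dvd ((int k - 1) - (int pj - int qi))" using assms by (simp add: mod_eq_dvd_iff)
  then have "int tau dvd (int (k + qi) - int (1 + pj))" by (simp add: algebra_simps)
  then have "int (k + qi) mod int tau = int (1 + pj) mod int tau" by (simp add: mod_eq_dvd_iff)
  then have "int ((k + qi) mod tau) = int ((1 + pj) mod tau)" by (simp add: of_nat_mod)
  then show ?thesis by simp
qed

lemma Gamma_rel:
  fixes A :: "nat \<Rightarrow> nat \<Rightarrow> nat \<Rightarrow> real" and w :: complex
  assumes tau: "tau > 0" and wt: "w ^ tau = 1" and w0: "w \<noteq> 0" and y: "y > 0"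
    and nn: "\<And>k. 0 \<le> A k i j"
    and pc: "\<And>k. k \<ge> -1 \<Longrightarrow> A (nat (k + 1)) i j > 0 \<Longrightarrow>
        k mod int tau = (int (p j) - int (p i)) mod int tau"
    and sm: "summable (\<lambda>k. A k i j * y ^ k)"
  shows "GammaA A (of_real y * w) i j = inverse (w ^ p i) * GammaA A (of_real y) i j * inverse (inverse (w ^ p j))"
proof -
  define c where "c = w * w ^ p j * inverse (w ^ p i)"
  define f where "f = (\<lambda>k. complex_of_real y ^ k * complex_of_real (A k i j))"
  have hterm: "(complex_of_real y * w) ^ k * complex_of_real (A k i j) = f k * c" for k
  proof (cases "A k i j = 0")
    case True
    then show ?thesis by (simp add: f_def)
  next
    case False
    then have pos: "A (nat ((int k - 1) + 1)) i j > 0" using nn[of k] by simp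
    have "(int k - 1) mod int tau = (int (p j) - int (p i)) mod int tau"
      by (rule pc[OF _ pos]) simp
    then have "(k + p i) mod tau = (1 + p j) mod tau" by (rule cong_shift)
    then have "w ^ (k + p i) = w ^ (1 + p j)" by (rule pow_mod_eq[OF wt])
    then have "w ^ k * w ^ p i = w * w ^ p j" by (simp add: power_add)
    then have "w ^ k = c" unfolding c_def using w0 by (simp add: field_simps)
    then show ?thesis by (simp add: f_def power_mult_distrib mult_ac)
  qed
  have smf: "summable f"
  proof -
    have "summable (\<lambda>k. complex_of_real (A k i j * y ^ k))" by (rule summable_complex_of_real[THEN iffD2, OF sm])
    then show ?thesis unfolding f_def by (simp add: mult_ac)
  qed
  have "GammaA A (of_real y * w) i j = (\<Sum>k. f k * c) / (of_real y * w)"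
    unfolding GammaA_def using hterm by simp
  also have "\<dots> = suminf f * c / (of_real y * w)" using suminf_mult2[OF smf] by simp
  also have "\<dots> = inverse (w ^ p i) * (suminf f / of_real y) * inverse (inverse (w ^ p j))"
    using w0 y by (simp add: c_def field_simps)
  also have "suminf f / of_real y = GammaA A (of_real y) i j" unfolding GammaA_def f_def by simp
  finally show ?thesis .
qed



theorem proposition2p10:
  fixes M0 M :: nat
    and A B :: "nat \<Rightarrow> nat \<Rightarrow> nat \<Rightarrow> real"
    and C0 :: "nat \<Rightarrow> nat \<Rightarrow> real"
    and p :: "nat \<Rightarrow> nat"
    and y :: real and \<nu> :: nat
  assumes M0_pos: "M0 > 0" and M_pos: "M > 0"
    and A_nonneg: "\<And>k i j. i < M \<Longrightarrow> j < M \<Longrightarrow> A k i j \<ge> 0"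
    and B0_nonneg: "\<And>i j. i < M0 \<Longrightarrow> j < M0 \<Longrightarrow> B 0 i j \<ge> 0"
    and B_nonneg: "\<And>k i j. k \<ge> 1 \<Longrightarrow> i < M0 \<Longrightarrow> j < M \<Longrightarrow> B k i j \<ge> 0"
    and C0_nonneg: "\<And>i j. i < M \<Longrightarrow> j < M0 \<Longrightarrow> C0 i j \<ge> 0"
    and A_summable: "\<And>i j. i < M \<Longrightarrow> j < M \<Longrightarrow> summable (\<lambda>k. A k i j)"
    and A_stoch: "\<And>i. i < M \<Longrightarrow> (\<Sum>j<M. Asum A i j) = 1"
    and B_stoch: "\<And>i. i < M0 \<Longrightarrow>
        (\<lambda>k. \<Sum>j<M. B (Suc k) i j) sums (1 - (\<Sum>j<M0. B 0 i j))"
    and C_stoch: "\<And>i. i < M \<Longrightarrow>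
        (\<lambda>k. \<Sum>j<M. A (Suc k) i j) sums (1 - (\<Sum>j<M0. C0 i j))"
    and T_irr: "T_irreducible M0 M A B C0"
    and A_irr: "matrix_irreducible M (Asum A)"
    and p_range: "\<And>i. i < M \<Longrightarrow> p i < MAP_period M A"
    and p_cong: "\<And>k i j. i < M \<Longrightarrow> j < M \<Longrightarrow> k \<ge> -1 \<Longrightarrow> A (nat (k + 1)) i j > 0 \<Longrightarrow>
        k mod int (MAP_period M A) = (int (p j) - int (p i)) mod int (MAP_period M A)"
    and y_pos: "0 < y" and y_lt: "ereal y < rA M A"
    and nu_lt: "\<nu> < MAP_period M A"
  shows "delta M (GammaA A (of_real y * omega (MAP_period M A) ^ \<nu>))
           = delta M (GammaA A (of_real y))
       \<and> (\<forall>i. mu M A p (of_real y * omega (MAP_period M A) ^ \<nu>) i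
              = mu M A p (of_real y) i * inverse (DeltaM p (omega (MAP_period M A) ^ \<nu>) i))
       \<and> (\<forall>i. vv M A p (of_real y * omega (MAP_period M A) ^ \<nu>) i
              = DeltaM p (omega (MAP_period M A) ^ \<nu>) i * vv M A p (of_real y) i)"
proof -
  define tau where "tau = MAP_period M A"
  have tau: "tau > 0" using nu_lt unfolding tau_def by simp
  define w where "w = omega tau ^ \<nu>"
  have wt: "w ^ tau = 1"
  proof -
    have "w ^ tau = (omega tau ^ tau) ^ \<nu>" unfolding w_def by (simp add: power_mult[symmetric] mult.commute)
    then show ?thesis using omega_pow_tau[OF tau] by simp
  qed
  have wn: "cmod w = 1" unfolding w_def by (simp add: norm_power norm_omega)
  have w0: "w \<noteq> 0" using wn by auto
  define d where "d = DeltaM p w"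
  have hd: "\<And>i. d i \<noteq> 0" using w0 by (simp add: d_def DeltaM_def)
  have sm: "summable (\<lambda>k. A k i j * y ^ k)" if ij: "i < M" "j < M" for i j
  proof -
    have "rA M A \<le> conv_radius (\<lambda>k. A k i j)"
      unfolding rA_def using ij by (intro INF_lower2[of "(i,j)"]) auto
    then have "ereal (norm y) < conv_radius (\<lambda>k. A k i j)" using y_lt y_pos by simp
    then show ?thesis by (rule summable_in_conv_radius)
  qed
  define z where "z = complex_of_real y * w"
  define Xy where "Xy = GammaA A (complex_of_real y)"
  define Xz where "Xz = GammaA A z"
  have Grel: "Xz i j = d i * Xy i j * inverse (d j)" if ij: "i < M" "j < M" for i j
    unfolding Xz_def Xy_def z_def d_def DeltaM_def
  proof (rule Gamma_rel[OF tau wt w0 y_pos])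
    show "\<And>k. 0 \<le> A k i j" using A_nonneg ij by auto
    show "summable (\<lambda>k. A k i j * y ^ k)" by (rule sm[OF ij])
    show "\<And>k. k \<ge> -1 \<Longrightarrow> A (nat (k + 1)) i j > 0 \<Longrightarrow>
        k mod int tau = (int (p j) - int (p i)) mod int tau"
      using p_cong ij unfolding tau_def by blast
  qed
  define R where "R = (\<lambda>i j. (\<Sum>k. A k i j * y ^ k) / y)"
  define XR where "XR = (\<lambda>i j. complex_of_real (R i j))"
  have XyR: "Xy i j = 1 * XR i j * inverse 1" if ij: "i < M" "j < M" for i j
  proof -
    have "complex_of_real (\<Sum>k. A k i j * y ^ k) = (\<Sum>k. complex_of_real (A k i j * y ^ k))"
      by (rule suminf_of_real[OF sm[OF ij]])
    then show ?thesis unfolding Xy_def XR_def R_def GammaA_def by (simp add: mult_ac)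
  qed
  have nnR: "nonnegm M R" unfolding nonnegm_def R_def
    using A_nonneg sm y_pos by (auto intro!: divide_nonneg_pos suminf_nonneg)
  have edge: "pfE M R a b" if ab: "a < M" "b < M" "Asum A a b > 0" for a b
  proof -
    obtain k where k: "A k a b > 0"
    proof (rule ccontr)
      assume "\<not> thesis"
      with that have "\<forall>k. A k a b = 0" using A_nonneg ab by (meson linorder_not_le order_antisym)
      then have "Asum A a b = 0" by (simp add: Asum_def)
      then show False using ab by simp
    qed
    have "(\<Sum>k. A k a b * y ^ k) > 0"
      by (rule suminf_pos2[OF sm[OF ab(1,2)], of k]) (use A_nonneg ab y_pos k in auto)
    then show ?thesis using ab y_pos by (simp add: pfE_def R_def)
  qed
  have irrR: "irred M R" unfolding irred_def
  proof (intro allI impI)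
    fix i j assume "i < M" "j < M"
    then have "(\<lambda>a b. a < M \<and> b < M \<and> Asum A a b > 0)\<^sup>*\<^sup>* i j" using A_irr by (auto simp: matrix_irreducible_def)
    then show "(pfE M R)\<^sup>*\<^sup>* i j" by (rule rtranclp_mono[THEN predicate2D, rotated]) (auto intro: edge)
  qed
  note PF = PF_final[OF M_pos nnR irrR, folded XR_def]
  have one: "(\<lambda>i. 1::complex) i \<noteq> 0" for i by simp
  have dXy: "delta M Xy = delta M XR" by (rule sim_delta[OF XyR one])
  have lXy: "is_left_eigvec M Xy lam u = is_left_eigvec M XR lam u" for lam u
    using sim_left[where X'=Xy and X=XR and d="\<lambda>i. 1", OF XyR one] by simp
  have rXy: "is_right_eigvec M Xy lam u = is_right_eigvec M XR lam u" for lam u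
    using sim_right[where X'=Xy and X=XR and d="\<lambda>i. 1", OF XyR one] by simp
  have dz: "delta M Xz = delta M Xy" by (rule sim_delta[OF Grel hd])
  have ny: "complex_of_real y / complex_of_real (cmod (complex_of_real y)) = 1" using y_pos by simp
  have nz: "z / complex_of_real (cmod z) = w" using y_pos wn w0 by (simp add: z_def norm_mult)
  have D1: "DeltaM p 1 i = 1" for i by (simp add: DeltaM_def)
  define Py where "Py = (\<lambda>u. (\<forall>i\<ge>M. u i = 0) \<and> is_left_eigvec M Xy (delta M Xy) u
      \<and> (\<Sum>i<M. u i * DeltaM p (complex_of_real y / complex_of_real (cmod (complex_of_real y))) i) = 1)"
  define Pz where "Pz = (\<lambda>u. (\<forall>i\<ge>M. u i = 0) \<and> is_left_eigvec M Xz (delta M Xz) u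
      \<and> (\<Sum>i<M. u i * DeltaM p (z / complex_of_real (cmod z)) i) = 1)"
  have exPy: "\<exists>!u. Py u" unfolding Py_def ny D1 dXy lXy using PF(1) by simp
  have PzPy: "Pz u \<longleftrightarrow> Py (\<lambda>i. u i * d i)" for u
  proof -
    have "(\<forall>i\<ge>M. u i = 0) \<longleftrightarrow> (\<forall>i\<ge>M. u i * d i = 0)" using hd by simp
    moreover have "is_left_eigvec M Xz (delta M Xz) u \<longleftrightarrow> is_left_eigvec M Xy (delta M Xy) (\<lambda>i. u i * d i)"
      unfolding dz by (rule sim_left[OF Grel hd])
    moreover have "(\<Sum>i<M. u i * DeltaM p (z / complex_of_real (cmod z)) i) = (\<Sum>i<M. u i * d i * DeltaM p 1 i)"
      unfolding nz D1 d_def by simp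
    ultimately show ?thesis unfolding Pz_def Py_def ny by simp
  qed
  have muy: "mu M A p (complex_of_real y) = (THE u. Py u)" unfolding mu_def Py_def Xy_def ..
  have muz: "mu M A p z = (THE u. Pz u)" unfolding mu_def Pz_def Xz_def ..
  have MU: "mu M A p z = (\<lambda>i. mu M A p (complex_of_real y) i * inverse (d i))"
    unfolding muy muz
    by (rule the_transfer(1)[where P=Py and Q=Pz and g="\<lambda>u i. u i * d i" and h="\<lambda>u i. u i * inverse (d i)", OF exPy PzPy]) (use hd in \<open>auto simp: field_simps\<close>)
  have Pmuy: "Py (mu M A p (complex_of_real y))" unfolding muy by (rule theI'[OF exPy])
  define U where "U = mu M A p (complex_of_real y)"
  define Qy where "Qy = (\<lambda>v. (\<forall>i\<ge>M. v i = 0) \<and> is_right_eigvec M Xy (delta M Xy) v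
      \<and> (\<Sum>i<M. mu M A p (complex_of_real y) i * v i) = 1)"
  define Qz where "Qz = (\<lambda>v. (\<forall>i\<ge>M. v i = 0) \<and> is_right_eigvec M Xz (delta M Xz) v
      \<and> (\<Sum>i<M. mu M A p z i * v i) = 1)"
  have exQy: "\<exists>!v. Qy v"
  proof -
    have "(\<forall>i\<ge>M. U i = 0) \<and> is_left_eigvec M XR (delta M XR) U \<and> (\<Sum>i<M. U i) = 1"
      using Pmuy unfolding Py_def ny D1 dXy lXy U_def by simp
    from PF(2)[OF this] show ?thesis unfolding Qy_def dXy rXy U_def .
  qed
  have QzQy: "Qz v \<longleftrightarrow> Qy (\<lambda>i. inverse (d i) * v i)" for v
  proof -
    have "(\<forall>i\<ge>M. v i = 0) \<longleftrightarrow> (\<forall>i\<ge>M. inverse (d i) * v i = 0)" using hd by simp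
    moreover have "is_right_eigvec M Xz (delta M Xz) v \<longleftrightarrow> is_right_eigvec M Xy (delta M Xy) (\<lambda>i. inverse (d i) * v i)"
      unfolding dz by (rule sim_right[OF Grel hd])
    moreover have "(\<Sum>i<M. mu M A p z i * v i) = (\<Sum>i<M. mu M A p (complex_of_real y) i * (inverse (d i) * v i))"
      unfolding MU by (simp add: mult_ac)
    ultimately show ?thesis unfolding Qz_def Qy_def by simp
  qed
  have vvy: "vv M A p (complex_of_real y) = (THE v. Qy v)" unfolding vv_def Qy_def Xy_def ..
  have vvz: "vv M A p z = (THE v. Qz v)" unfolding vv_def Qz_def Xz_def ..
  have VV: "vv M A p z = (\<lambda>i. d i * vv M A p (complex_of_real y) i)"
    unfolding vvy vvz
    by (rule the_transfer(1)[where P=Qy and Q=Qz and g="\<lambda>v i. inverse (d i) * v i" and h="\<lambda>v i. d i * v i", OF exQy QzQy]) (use hd in \<open>auto simp: field_simps\<close>)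
  show ?thesis
    using dz MU VV unfolding Xz_def Xy_def z_def w_def d_def tau_def by simp
qed

end
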